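(* Every quantum graph $G$ has a coloring of cardinality at most $\operatorname{slog}(|G|,(\|G\|+1)^2)$.
   Context: A quantum graph $G$ consists of a finite-dimensional complex inner product space $V(G)$ and a real vector space $E(G)$ of self-adjoint operators on $V(G)$ containing the identity $I$; write $|G|=\dim V(G)$ and $\|G\|=\dim E(G)-1$. A code of $G$ is a subspace $C\subseteq V(G)$ such that there is a function $\epsilon_C:E(G)\to\mathbb{R}$ with $P_CAP_C=\epsilon_C(A)P_C$ for all $A\in E(G)$, where $P_C$ is the orthogonal projection onto $C$. A coloring of $G$ is a set $K$ of codes of $G$ with $\sum_{C\in K}P_C=I$. The step logarithm is defined for positive integers $q$ and nonnegative integers $p$ by $\operatorname{slog}(0,q)=0$ and $\operatorname{slog}(p,q)=\operatorname{slog}(p-\lceil p/q\rceil,q)+1$ for $p\ge1$. *)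

theory Defs
  imports "HOL-Analysis.Analysis"
begin

text \<open>Step logarithm. slog(0,q)=0 and slog(p,q) = slog(p - ceil(p/q), q) + 1 for p \<ge> 1.
  The paper only uses positive q; for q = 0 (never needed for q \<ge> 1) we return 0.\<close>
function slog :: "nat \<Rightarrow> nat \<Rightarrow> nat" where
  "slog p q = (if p = 0 \<or> q = 0 then 0 else slog (p - nat \<lceil>real p / real q\<rceil>) q + 1)"
  by auto
termination
proof (relation "Wellfounded.measure fst")
  show "wf (Wellfounded.measure fst)" by simp
next
  fix p q :: nat assume h: "\<not> (p = 0 \<or> q = 0)"
  hence "real p / real q > 0" by simp
  hence "\<lceil>real p / real q\<rceil> \<ge> 1" by linarith
  thus "((p - nat \<lceil>real p / real q\<rceil>, q), p, q) \<in> Wellfounded.measure fst" using h by simp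
qed

text \<open>The space V(G) is modelled as complex^'n (standard inner product), operators on V(G)
  as complex matrices complex^'n^'n.\<close>

definition cinner_vec :: "complex^'n \<Rightarrow> complex^'n \<Rightarrow> complex" where
  "cinner_vec x y = (\<Sum>i\<in>UNIV. cnj (x $ i) * y $ i)"

definition adjoint_mat :: "complex^'n^'n \<Rightarrow> complex^'n^'n" where
  "adjoint_mat A = (\<chi> i j. cnj (A $ j $ i))"

definition self_adjoint :: "complex^'n^'n \<Rightarrow> bool" where
  "self_adjoint A \<longleftrightarrow> adjoint_mat A = A"

definition csubspace :: "(complex^'n) set \<Rightarrow> bool" where
  "csubspace C \<longleftrightarrow> 0 \<in> C \<and> (\<forall>x\<in>C. \<forall>y\<in>C. x + y \<in> C) \<and> (\<forall>c. \<forall>x\<in>C. c *s x \<in> C)"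

definition orth_proj :: "(complex^'n) set \<Rightarrow> complex^'n^'n" where
  "orth_proj C = (THE P. \<forall>v. P *v v \<in> C \<and> (\<forall>w\<in>C. cinner_vec w (v - P *v v) = 0))"

text \<open>A quantum graph with V(G) = complex^'n is given by E(G): a real vector space of
  self-adjoint operators containing the identity.\<close>
definition quantum_graph :: "(complex^'n^'n) set \<Rightarrow> bool" where
  "quantum_graph E \<longleftrightarrow> subspace E \<and> (\<forall>A\<in>E. self_adjoint A) \<and> mat 1 \<in> E"

definition qnorm :: "(complex^'n^'n) set \<Rightarrow> int" where
  "qnorm E = int (dim E) - 1"

definition is_code :: "(complex^'n^'n) set \<Rightarrow> (complex^'n) set \<Rightarrow> bool" where
  "is_code E C \<longleftrightarrow> csubspace C \<and>
     (\<exists>\<epsilon> :: complex^'n^'n \<Rightarrow> real. \<forall>A\<in>E. orth_proj C ** A ** orth_proj C = \<epsilon> A *\<^sub>R orth_proj C)"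

definition is_coloring :: "(complex^'n^'n) set \<Rightarrow> (complex^'n) set set \<Rightarrow> bool" where
  "is_coloring E K \<longleftrightarrow> finite K \<and> (\<forall>C\<in>K. is_code E C) \<and> (\<Sum>C\<in>K. orth_proj C) = mat 1"

end

theory Submission
  imports Defs
begin



lemma exists_nonpos_dot:
  fixes X :: "'a::euclidean_space set"
  assumes "finite X" "0 \<in> convex hull X"
  shows "\<exists>x\<in>X. x \<bullet> z \<le> 0"
proof (rule ccontr)
  assume "\<not> ?thesis"
  then have pos: "\<forall>x\<in>X. x \<bullet> z > 0" by auto
  obtain u where u: "\<forall>x\<in>X. 0 \<le> u x" "sum u X = 1" "(\<Sum>x\<in>X. u x *\<^sub>R x) = 0"
    using assms convex_hull_finite[of X] by auto
  have "0 = (\<Sum>x\<in>X. u x *\<^sub>R x) \<bullet> z" using u by simp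
  also have "\<dots> = (\<Sum>x\<in>X. u x * (x \<bullet> z))" by (simp add: inner_sum_left)
  also have "\<dots> > 0"
  proof -
    obtain x0 where "x0 \<in> X" "u x0 > 0"
      using u(1,2) by (metis less_eq_real_def sum_nonpos zero_less_one not_less)
    then have "u x0 * (x0 \<bullet> z) > 0" using pos by auto
    moreover have "(\<Sum>x\<in>X. u x * (x \<bullet> z)) \<ge> u x0 * (x0 \<bullet> z)"
      by (rule member_le_sum) (use \<open>x0\<in>X\<close> u pos assms in \<open>auto intro: mult_nonneg_nonneg less_imp_le\<close>)
    ultimately show ?thesis by linarith
  qed
  finally show False by simp
qed




lemma cc_hull_on_hyperplane:
  fixes Y :: "'a::euclidean_space set"
  assumes "finite Y" "z \<in> convex hull Y" "\<forall>y\<in>Y. z \<bullet> z \<le> y \<bullet> z"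
  shows "z \<in> convex hull {y\<in>Y. z \<bullet> y = z \<bullet> z}"
proof -
  obtain u where u: "\<forall>x\<in>Y. 0 \<le> u x" "sum u Y = 1" "(\<Sum>x\<in>Y. u x *\<^sub>R x) = z"
    using assms convex_hull_finite[of Y] by auto
  have "(\<Sum>y\<in>Y. u y * (y \<bullet> z - z \<bullet> z)) = (\<Sum>x\<in>Y. u x *\<^sub>R x) \<bullet> z - (\<Sum>y\<in>Y. u y) * (z \<bullet> z)"
    by (simp add: inner_sum_left sum_subtractf sum_distrib_right algebra_simps)
  also have "\<dots> = 0" using u by simp
  finally have s0: "(\<Sum>y\<in>Y. u y * (y \<bullet> z - z \<bullet> z)) = 0" .
  have each: "\<forall>y\<in>Y. u y * (y \<bullet> z - z \<bullet> z) = 0"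
    using sum_nonneg_eq_0_iff[OF assms(1), of "\<lambda>y. u y * (y \<bullet> z - z \<bullet> z)"] s0 u(1) assms(3)
    by auto
  let ?T = "{y\<in>Y. z \<bullet> y = z \<bullet> z}"
  have z0: "\<forall>y\<in>Y - ?T. u y = 0" using each by (auto simp: inner_commute)
  have "sum u ?T = 1"
    using u(2) sum.mono_neutral_right[OF assms(1), of ?T u] z0 by auto
  moreover have "(\<Sum>x\<in>?T. u x *\<^sub>R x) = z"
    using u(3) sum.mono_neutral_right[OF assms(1), of ?T "\<lambda>x. u x *\<^sub>R x"] z0 by auto
  ultimately show ?thesis
    using convex_hull_finite[of ?T] assms(1) u(1) by auto
qed

lemma cc_aff_dim:
  fixes S :: "'a::euclidean_space set"
  assumes "subspace S" "z \<noteq> 0" "T \<subseteq> S \<inter> {x. z \<bullet> x = z \<bullet> z}"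
  shows "aff_dim T \<le> int (dim S) - 1"
proof -
  have "aff_dim T \<le> aff_dim (S \<inter> {x. z \<bullet> x = z \<bullet> z})" by (rule aff_dim_subset[OF assms(3)])
  also have "\<dots> \<le> int (dim S) - 1"
  proof -
    have nsub: "\<not> S \<subseteq> {v. z \<bullet> v = z \<bullet> z}"
      using assms(1,2) subspace_0 by fastforce
    show ?thesis
      using aff_dim_affine_Int_hyperplane[OF subspace_imp_affine[OF assms(1)], of z "z \<bullet> z"] nsub
        aff_dim_subspace[OF assms(1)] by (auto split: if_splits)
  qed
  finally show ?thesis .
qed

lemma cc_decrease:
  fixes z x :: "'a::euclidean_space"
  assumes "z \<noteq> 0" "x \<bullet> z \<le> 0"
  shows "\<exists>t. 0 \<le> t \<and> t \<le> 1 \<and> norm (z + t *\<^sub>R (x - z)) < norm z"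
proof -
  define a where "a = z \<bullet> z"
  define b where "b = (x - z) \<bullet> (x - z)"
  define c where "c = z \<bullet> (x - z)"
  have a: "a > 0" using assms unfolding a_def by simp
  have b: "b \<ge> 0" unfolding b_def by simp
  have c: "c \<le> - a" using assms unfolding a_def c_def by (simp add: inner_diff_right inner_commute)
  define t where "t = a / (a + b)"
  have t0: "0 < t" "t \<le> 1" using a b unfolding t_def by auto
  have tb: "t * b < a"
  proof -
    have "t * b = a * b / (a + b)" unfolding t_def by simp
    also have "\<dots> < a" using a b by (simp add: divide_less_eq field_simps)
    finally show ?thesis .
  qed
  have "norm (z + t *\<^sub>R (x - z)) ^ 2 = a + 2 * t * c + t * t * b"
    unfolding power2_norm_eq_inner a_def b_def c_def
    by (simp add: inner_add_left inner_add_right inner_commute algebra_simps)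
  also have "\<dots> \<le> a - t * (2 * a - t * b)"
    proof -
    have "t * c \<le> t * (- a)" using c t0 by (intro mult_left_mono) auto
    then show ?thesis by (simp add: algebra_simps)
  qed
  also have "\<dots> < a"
    using t0 tb a by (simp add: mult_pos_pos)
  finally have "norm (z + t *\<^sub>R (x - z)) ^ 2 < norm z ^ 2"
    unfolding a_def by (simp add: power2_norm_eq_inner)
  then have "norm (z + t *\<^sub>R (x - z)) < norm z"
    using power_less_imp_less_base by fastforce
  then show ?thesis using t0 by (intro exI[of _ t]) auto
qed




lemma colorful_caratheodory:
  fixes X :: "nat \<Rightarrow> 'a::euclidean_space set" and S :: "'a set" and M :: nat
  assumes S: "subspace S" "dim S \<le> M"
    and X: "\<And>i. i \<le> M \<Longrightarrow> finite (X i) \<and> X i \<subseteq> S \<and> 0 \<in> convex hull (X i)"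
  shows "\<exists>f. (\<forall>i\<le>M. f i \<in> X i) \<and> 0 \<in> convex hull (f ` {..M})"
proof -
  define F where "F = PiE {..M} X"
  have finF: "finite F" unfolding F_def using X by (intro finite_PiE) auto
  have Xne: "X i \<noteq> {}" if "i \<le> M" for i using X[OF that] by auto
  have neF: "F \<noteq> {}" unfolding F_def using Xne by (simp add: PiE_eq_empty_iff)
  define D where "D f = norm (closest_point (convex hull (f ` {..M})) 0)" for f :: "nat \<Rightarrow> 'a"
  obtain f where fF: "f \<in> F" and fmin: "\<And>g. g \<in> F \<Longrightarrow> D f \<le> D g"
  proof -
    have "Min (D ` F) \<in> D ` F" using finF neF by (intro Min_in) auto
    then obtain f where "f \<in> F" "D f = Min (D ` F)" by auto
    moreover have "\<And>g. g \<in> F \<Longrightarrow> Min (D ` F) \<le> D g" using finF by auto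
    ultimately show ?thesis using that by metis
  qed
  have fX: "\<forall>i\<le>M. f i \<in> X i" using fF unfolding F_def by auto
  show ?thesis
  proof (rule ccontr)
    assume "\<not> ?thesis"
    then have n0: "0 \<notin> convex hull (f ` {..M})" using fX by blast
    define Y where "Y = f ` {..M}"
    define C where "C = convex hull Y"
    have finY: "finite Y" unfolding Y_def by auto
    have Cc: "convex C" "closed C" "C \<noteq> {}"
      unfolding C_def Y_def using finY
      by (auto intro: compact_imp_closed finite_imp_compact_convex_hull)
    define z where "z = closest_point C 0"
    have zC: "z \<in> C" unfolding z_def using Cc closest_point_in_set by blast
    have z0: "z \<noteq> 0" using zC n0 unfolding C_def Y_def by auto
    have zdot: "z \<bullet> z \<le> x \<bullet> z" if "x \<in> C" for x
    proof -
      have "(0 - z) \<bullet> (x - z) \<le> 0" unfolding z_def using closest_point_dot[OF Cc(1,2) that, of 0] by simp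
      then show ?thesis by (simp add: inner_diff_right inner_commute)
    qed
    have "z \<in> convex hull {y\<in>Y. z \<bullet> y = z \<bullet> z}"
      using cc_hull_on_hyperplane[OF finY zC[unfolded C_def]] zdot hull_subset[of Y convex]
      unfolding C_def by auto
    moreover have "aff_dim {y\<in>Y. z \<bullet> y = z \<bullet> z} \<le> int (dim S) - 1"
      proof (rule cc_aff_dim[OF S(1) z0])
      have "Y \<subseteq> S" using X fX unfolding Y_def by blast
      then show "{y \<in> Y. z \<bullet> y = z \<bullet> z} \<subseteq> S \<inter> {x. z \<bullet> x = z \<bullet> z}" by blast
    qed
    ultimately obtain T where T: "finite T" "T \<subseteq> {y\<in>Y. z \<bullet> y = z \<bullet> z}" "card T \<le> M" "z \<in> convex hull T"
    proof -
      let ?H = "{y\<in>Y. z \<bullet> y = z \<bullet> z}"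
      from \<open>z \<in> convex hull ?H\<close> obtain T where "finite T" "T \<subseteq> ?H" "card T \<le> aff_dim ?H + 1" "z \<in> convex hull T"
        using caratheodory_aff_dim[of ?H] by blast
      moreover have "card T \<le> M" using calculation(3) \<open>aff_dim ?H \<le> int (dim S) - 1\<close> S(2) by linarith
      ultimately show ?thesis using that by blast
    qed
    define c where "c t = (SOME i. i \<le> M \<and> f i = t)" for t
    have c: "c t \<le> M \<and> f (c t) = t" if "t \<in> T" for t
    proof -
      have "\<exists>i. i \<le> M \<and> f i = t" using T(2) that unfolding Y_def by auto
      then show ?thesis unfolding c_def by (rule someI_ex)
    qed
    have "card (c ` T) \<le> M" using T(1,3) card_image_le order_trans by blast
    then have "c ` T \<noteq> {..M}" by auto
    moreover have "c ` T \<subseteq> {..M}" using c by auto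
    ultimately obtain i where i: "i \<le> M" "i \<notin> c ` T" by auto
    obtain x' where x': "x' \<in> X i" "x' \<bullet> z \<le> 0"
      using exists_nonpos_dot X[OF i(1)] by blast
    define g where "g = f(i := x')"
    have gF: "g \<in> F" using fF x' i unfolding F_def g_def by (auto simp: PiE_def extensional_def)
    have Tg: "T \<subseteq> g ` {..M}"
    proof
      fix t assume "t \<in> T"
      then have "c t \<noteq> i" "c t \<le> M" "f (c t) = t" using c i by auto
      then show "t \<in> g ` {..M}" unfolding g_def by (auto intro!: image_eqI[of _ _ "c t"])
    qed
    have x'g: "x' \<in> g ` {..M}" using i unfolding g_def by auto
    obtain t where t: "0 \<le> t" "t \<le> 1" "norm (z + t *\<^sub>R (x' - z)) < norm z"
      using cc_decrease[OF z0 x'(2)] by blast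
    have "z + t *\<^sub>R (x' - z) \<in> convex hull (g ` {..M})"
    proof -
      have zz: "z \<in> convex hull (g ` {..M})" using subsetD[OF hull_mono[OF Tg] T(4)] .
      have xx: "x' \<in> convex hull (g ` {..M})" using x'g hull_subset[of "g ` {..M}" convex] by blast
      have "(1 - t) *\<^sub>R z + t *\<^sub>R x' \<in> convex hull (g ` {..M})"
        using convexD[OF convex_convex_hull zz xx, of "1-t" t] t by auto
      moreover have "(1 - t) *\<^sub>R z + t *\<^sub>R x' = z + t *\<^sub>R (x' - z)" by (simp add: algebra_simps)
      ultimately show ?thesis by simp
    qed
    then have "D g < D f"
    proof -
      let ?Cg = "convex hull (g ` {..M})"
      have "closed ?Cg" by (auto intro: compact_imp_closed finite_imp_compact_convex_hull)
      then have "dist 0 (closest_point ?Cg 0) \<le> dist 0 (z + t *\<^sub>R (x' - z))"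
        using closest_point_le \<open>z + t *\<^sub>R (x' - z) \<in> ?Cg\<close> by blast
      then have "norm (closest_point ?Cg 0) \<le> norm (z + t *\<^sub>R (x' - z))"
        by (simp add: dist_norm) (metis norm_minus_cancel minus_diff_eq diff_minus_eq_add add.commute)
      then show ?thesis using t(3) unfolding D_def z_def C_def Y_def by linarith
    qed
    then show False using fmin[OF gF] by simp
  qed
qed




lemma hull_image_weights:
  fixes f :: "nat \<Rightarrow> 'a::euclidean_space"
  assumes "y \<in> convex hull (f ` I)" "finite I"
  shows "\<exists>w. (\<forall>i\<in>I. 0 \<le> w i) \<and> sum w I = 1 \<and> (\<Sum>i\<in>I. w i *\<^sub>R f i) = y"
proof -
  obtain u where u: "\<forall>x\<in>f ` I. 0 \<le> u x" "sum u (f ` I) = 1" "(\<Sum>x\<in>f ` I. u x *\<^sub>R x) = y"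
  proof -
    have "finite (f ` I)" using assms(2) by simp
    then show ?thesis using assms(1) convex_hull_finite[of "f ` I"] that by blast
  qed
  define rep where "rep x = (SOME i. i \<in> I \<and> f i = x)" for x
  have rep: "rep x \<in> I \<and> f (rep x) = x" if "x \<in> f ` I" for x
  proof -
    have "\<exists>i. i \<in> I \<and> f i = x" using that by blast
    then show ?thesis unfolding rep_def by (rule someI_ex)
  qed
  define R where "R = rep ` (f ` I)"
  have RI: "R \<subseteq> I" using rep unfolding R_def by auto
  have injR: "inj_on f R" unfolding R_def inj_on_def using rep by auto
  have fR: "f ` R = f ` I"
  proof
    show "f ` R \<subseteq> f ` I" using RI by blast
    show "f ` I \<subseteq> f ` R"
    proof
      fix x assume "x \<in> f ` I"
      then have "rep x \<in> R" "f (rep x) = x" using rep unfolding R_def by auto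
      then show "x \<in> f ` R" by (metis imageI)
    qed
  qed
  define w where "w i = (if i \<in> R then u (f i) else 0)" for i
  have "sum w I = sum w R"
    using sum.mono_neutral_right[OF assms(2) RI, of w] unfolding w_def by auto
  also have "\<dots> = sum (u \<circ> f) R" unfolding w_def by simp
  also have "\<dots> = sum u (f ` R)" using sum.reindex[OF injR, of u] by simp
  finally have s1: "sum w I = 1" using fR u by simp
  have "(\<Sum>i\<in>I. w i *\<^sub>R f i) = (\<Sum>i\<in>R. w i *\<^sub>R f i)"
    using sum.mono_neutral_right[OF assms(2) RI, of "\<lambda>i. w i *\<^sub>R f i"] unfolding w_def by auto
  also have "\<dots> = (\<Sum>i\<in>R. u (f i) *\<^sub>R f i)" unfolding w_def by simp
  also have "\<dots> = (\<Sum>x\<in>f ` R. u x *\<^sub>R x)" using sum.reindex[OF injR, of "\<lambda>x. u x *\<^sub>R x"] by simp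
  finally have s2: "(\<Sum>i\<in>I. w i *\<^sub>R f i) = y" using fR u by simp
  have "\<forall>i\<in>I. 0 \<le> w i" unfolding w_def using u(1) by auto
  then show ?thesis using s1 s2 by blast
qed




lemma sarkaria_subspace_dim:
  fixes L :: "'a::euclidean_space set" and \<tau> :: "nat \<Rightarrow> 'b::finite" and k :: nat
  assumes L: "subspace L" "dim L \<le> m"
  defines "Sx \<equiv> {w :: 'a^'b. (\<forall>b. w $ b \<in> L) \<and> (\<forall>b. b \<notin> \<tau> ` {..<k} \<longrightarrow> w $ b = 0)}"
  shows "subspace Sx" "dim Sx \<le> k * m"
proof -
  show "subspace Sx"
    unfolding subspace_def Sx_def using L(1)
    by (auto simp: subspace_0 subspace_add subspace_scale)
  obtain BL where BL: "BL \<subseteq> L" "independent BL" "L \<subseteq> span BL" "card BL = dim L"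
    using basis_exists[of L] by blast
  have finBL: "finite BL" using BL(2) by (simp add: independent_imp_finite)
  define emb where "emb t l = (\<chi> b. if b = \<tau> t then l else 0)" for t :: nat and l :: 'a
  have lin: "linear (emb t)" for t
    unfolding emb_def by (rule linearI) (auto simp: vec_eq_iff)
  define Bs where "Bs = (\<Union>t\<in>{..<k}. emb t ` BL)"
  have finBs: "finite Bs" unfolding Bs_def using finBL by auto
  have cardBs: "card Bs \<le> k * m"
  proof -
    have "card Bs \<le> (\<Sum>t\<in>{..<k}. card (emb t ` BL))" unfolding Bs_def by (rule card_UN_le) simp
    also have "\<dots> \<le> (\<Sum>t\<in>{..<k}. m)"
    proof (rule sum_mono)
      fix t show "card (emb t ` BL) \<le> m" using card_image_le[OF finBL, of "emb t"] BL(4) L(2) by linarith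
    qed
    finally show ?thesis by simp
  qed
  have "Sx \<subseteq> span Bs"
  proof
    fix w assume w: "w \<in> Sx"
    have weq: "w = (\<Sum>t\<in>\<tau> ` {..<k}. (\<chi> b. if b = t then w $ t else 0))"
    proof (subst vec_eq_iff, intro allI)
      fix b
      have "(\<Sum>t\<in>\<tau> ` {..<k}. (\<chi> b. if b = t then w $ t else 0)) $ b
            = (\<Sum>t\<in>\<tau> ` {..<k}. (if b = t then w $ t else 0))" by (simp add: sum_component)
      also have "\<dots> = (if b \<in> \<tau> ` {..<k} then w $ b else 0)"
        by (simp add: sum.delta')
      also have "\<dots> = w $ b" using w unfolding Sx_def by auto
      finally show "w $ b = (\<Sum>t\<in>\<tau> ` {..<k}. (\<chi> b. if b = t then w $ t else 0)) $ b" by simp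
    qed
    have "(\<chi> b. if b = \<tau> t then w $ (\<tau> t) else 0) \<in> span Bs" if t: "t < k" for t
    proof -
      have "w $ (\<tau> t) \<in> span BL" using w BL(3) unfolding Sx_def by blast
      then have "emb t (w $ (\<tau> t)) \<in> emb t ` span BL" by blast
      also have "\<dots> = span (emb t ` BL)" using span_linear_image[OF lin[of t]] by simp
      also have "\<dots> \<subseteq> span Bs" unfolding Bs_def using t by (intro span_mono) blast
      finally show ?thesis unfolding emb_def .
    qed
    then have "\<forall>t\<in>\<tau> ` {..<k}. (\<chi> b. if b = t then w $ t else 0) \<in> span Bs" by blast
    then have "(\<Sum>t\<in>\<tau> ` {..<k}. (\<chi> b. if b = t then w $ t else 0)) \<in> span Bs"
      by (intro span_sum) auto
    then show "w \<in> span Bs" using weq by simp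
  qed
  then have "dim Sx \<le> card Bs" using dim_le_card finBs by blast
  then show "dim Sx \<le> k * m" using cardBs by simp
qed




lemma tverberg_lifted:
  fixes x :: "nat \<Rightarrow> 'a::euclidean_space" and L :: "'a set" and \<tau> :: "nat \<Rightarrow> 'b::finite"
    and c :: 'a and m N r :: nat
  assumes L: "subspace L" "dim L \<le> m" and xL: "\<And>a. a < N \<Longrightarrow> x a \<in> L"
    and xc: "\<And>a. a < N \<Longrightarrow> x a \<bullet> c = 1"
    and N: "N = (r - 1) * m + 1" and r: "r \<ge> 1" and \<tau>: "inj_on \<tau> {..<r-1}"
  shows "\<exists>g w e. (\<forall>a<N. g a < r \<and> 0 \<le> w a) \<and>
     (\<forall>j<r. (\<Sum>a\<in>{a. a < N \<and> g a = j}. w a) = 1 \<and> (\<Sum>a\<in>{a. a < N \<and> g a = j}. w a *\<^sub>R x a) = e)"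
proof -
  define M where "M = (r - 1) * m"
  have NM: "{..M} = {..<N}" unfolding N M_def by auto
  define fj where "fj j b = (if j < r - 1 then (if b = \<tau> j then 1 else 0)
       else (if b \<in> \<tau> ` {..<r-1} then -1 else (0::real)))" for j b
  define z where "z a j = (\<chi> b. fj j b *\<^sub>R x a)" for a j
  define X where "X a = z a ` {..<r}" for a
  define Sx where "Sx = {w :: 'a^'b. (\<forall>b. w $ b \<in> L) \<and> (\<forall>b. b \<notin> \<tau> ` {..<r-1} \<longrightarrow> w $ b = 0)}"
  have Sx: "subspace Sx" "dim Sx \<le> M"
    using sarkaria_subspace_dim[OF L, of \<tau> "r-1"] unfolding Sx_def M_def by auto
  have rdec: "{..<r} = insert (r-1) {..<r-1}" using r by auto
  have fsum: "(\<Sum>j<r. fj j b) = 0" for b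
  proof -
    have "(\<Sum>j<r. fj j b) = fj (r-1) b + (\<Sum>j<r-1. fj j b)" unfolding rdec by simp
    also have "(\<Sum>j<r-1. fj j b) = (\<Sum>j<r-1. if b = \<tau> j then 1 else 0)"
      unfolding fj_def by (intro sum.cong) auto
    also have "\<dots> = (if b \<in> \<tau> ` {..<r-1} then 1 else 0)"
    proof (cases "b \<in> \<tau> ` {..<r-1}")
      case True
      then obtain j0 where j0: "j0 < r - 1" "b = \<tau> j0" by auto
      have "(\<Sum>j<r-1. if b = \<tau> j then 1 else (0::real)) = (\<Sum>j<r-1. if j = j0 then 1 else 0)"
        using \<tau> j0 by (intro sum.cong) (auto simp: inj_on_def)
      also have "\<dots> = 1" using j0 by simp
      finally show ?thesis using True by simp
    next
      case False
      then show ?thesis by (intro trans[OF sum.neutral]) auto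
    qed
    finally show ?thesis unfolding fj_def by auto
  qed
  have colors: "finite (X a) \<and> X a \<subseteq> Sx \<and> 0 \<in> convex hull (X a)" if a: "a \<le> M" for a
  proof (intro conjI)
    show "finite (X a)" unfolding X_def by simp
    show "X a \<subseteq> Sx"
    proof
      fix w assume "w \<in> X a"
      then obtain j where "w = z a j" unfolding X_def by auto
      moreover have "x a \<in> L" using xL a NM by auto
      ultimately show "w \<in> Sx" unfolding Sx_def z_def fj_def
        using L(1) by (auto simp: subspace_scale subspace_neg subspace_0)
    qed
    have "(\<Sum>j<r. (1 / real r) *\<^sub>R z a j) \<in> convex hull (X a)"
    proof (rule convex_sum)
      show "finite {..<r}" by simp
      show "convex (convex hull X a)" by simp
      show "(\<Sum>j<r. 1 / real r) = 1" using r by simp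
      show "\<And>i. i \<in> {..<r} \<Longrightarrow> 0 \<le> 1 / real r" by simp
      show "\<And>i. i \<in> {..<r} \<Longrightarrow> z a i \<in> convex hull X a"
        unfolding X_def using hull_subset[of "z a ` {..<r}" convex] by blast
    qed
    moreover have "(\<Sum>j<r. (1 / real r) *\<^sub>R z a j) = 0"
    proof (subst vec_eq_iff, intro allI)
      fix b
      have "(\<Sum>j<r. (1 / real r) *\<^sub>R z a j) $ b = (\<Sum>j<r. ((1 / real r) * fj j b) *\<^sub>R x a)"
        unfolding z_def by (simp add: sum_component)
      also have "\<dots> = ((1 / real r) * (\<Sum>j<r. fj j b)) *\<^sub>R x a"
        by (simp add: scaleR_sum_left sum_distrib_left)
      also have "\<dots> = 0" using fsum by simp
      finally show "(\<Sum>j<r. (1 / real r) *\<^sub>R z a j) $ b = 0 $ b" by simp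
    qed
    ultimately show "0 \<in> convex hull (X a)" by simp
  qed
  obtain f where f: "\<forall>a\<le>M. f a \<in> X a" and f0: "0 \<in> convex hull (f ` {..M})"
    using colorful_caratheodory[OF Sx, of X] colors by blast
  obtain w where w: "\<forall>a\<in>{..M}. 0 \<le> w a" "sum w {..M} = 1" "(\<Sum>a\<in>{..M}. w a *\<^sub>R f a) = 0"
    using hull_image_weights[OF f0] by auto
  define g where "g a = (SOME j. j < r \<and> f a = z a j)" for a
  have g: "g a < r \<and> f a = z a (g a)" if "a \<le> M" for a
  proof -
    have "\<exists>j. j < r \<and> f a = z a j" using f that unfolding X_def by auto
    then show ?thesis unfolding g_def by (rule someI_ex)
  qed
  define V where "V j = (\<Sum>a\<in>{a. a < N \<and> g a = j}. w a *\<^sub>R x a)" for j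
  define W where "W j = (\<Sum>a\<in>{a. a < N \<and> g a = j}. w a)" for j
  have Veq: "V t = V (r - 1)" if t: "t < r - 1" for t
  proof -
    have "0 = (\<Sum>a\<in>{..M}. w a *\<^sub>R f a) $ \<tau> t" using w(3) by simp
    also have "\<dots> = (\<Sum>a\<in>{..M}. (w a * fj (g a) (\<tau> t)) *\<^sub>R x a)"
      unfolding sum_component using g by (intro sum.cong) (auto simp: z_def)
    also have "\<dots> = (\<Sum>a\<in>{..M}. (if g a = t then w a *\<^sub>R x a else 0) -
                       (if g a = r - 1 then w a *\<^sub>R x a else 0))"
    proof (intro sum.cong refl)
      fix a assume "a \<in> {..M}"
      then have ga: "g a < r" using g by auto
      have "\<tau> t \<in> \<tau> ` {..<r-1}" using t by auto
      moreover have "g a < r - 1 \<Longrightarrow> (\<tau> t = \<tau> (g a)) = (t = g a)"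
        using \<tau> t by (auto simp: inj_on_def)
      ultimately show "(w a * fj (g a) (\<tau> t)) *\<^sub>R x a = (if g a = t then w a *\<^sub>R x a else 0) -
                       (if g a = r - 1 then w a *\<^sub>R x a else 0)"
        unfolding fj_def using ga t by auto
    qed
    also have "\<dots> = V t - V (r - 1)"
      unfolding V_def sum_subtractf NM by (simp add: sum.inter_filter[symmetric] Collect_conj_eq lessThan_def Int_commute)
    finally show ?thesis by simp
  qed
  have Vall: "V j = V (r - 1)" if "j < r" for j
  proof (cases "j < r - 1")
    case True then show ?thesis using Veq by blast
  next
    case False then have "j = r - 1" using that by linarith
    then show ?thesis by simp
  qed
  have WV: "W j = V j \<bullet> c" for j
    unfolding W_def V_def by (simp add: inner_sum_left xc)
  have Wall: "W j = W (r - 1)" if "j < r" for j using Vall[OF that] WV by simp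
  have "(\<Sum>j<r. W j) = sum w {..<N}"
  proof -
    have "g ` {..<N} \<subseteq> {..<r}" using g NM by auto
    from sum.group[OF _ _ this, of w] show ?thesis unfolding W_def
      by (simp add: lessThan_def)
  qed
  then have "(\<Sum>j<r. W j) = 1" using w(2) NM by simp
  moreover have "(\<Sum>j<r. W j) = r * W (r - 1)"
  proof -
    have "(\<Sum>j<r. W j) = (\<Sum>j<r. W (r - 1))" by (intro sum.cong refl) (rule Wall, simp)
    then show ?thesis by simp
  qed
  ultimately have Wr: "W (r - 1) = 1 / r" using r by (simp add: field_simps)
  show ?thesis
  proof (intro exI conjI allI impI)
    fix a assume "a < N"
    then show "g a < r" "0 \<le> real r * w a" using g w(1) NM by auto
  next
    fix j assume j: "j < r"
    show "(\<Sum>a\<in>{a. a < N \<and> g a = j}. real r * w a) = 1"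
      using Wall[OF j] Wr r unfolding W_def by (simp add: sum_distrib_left[symmetric])
    show "(\<Sum>a\<in>{a. a < N \<and> g a = j}. (real r * w a) *\<^sub>R x a) = real r *\<^sub>R V (r - 1)"
    proof -
      have "(\<Sum>a\<in>{a. a < N \<and> g a = j}. (real r * w a) *\<^sub>R x a) = real r *\<^sub>R V j"
        unfolding V_def by (simp add: scaleR_sum_right)
      then show ?thesis using Vall[OF j] by simp
    qed
  qed
qed




lemma cinner_zero_right[simp]: "cinner_vec x 0 = 0"
  unfolding cinner_vec_def by simp
lemma cinner_zero_left[simp]: "cinner_vec 0 x = 0"
  unfolding cinner_vec_def by simp
lemma cinner_add_right: "cinner_vec x (y + z) = cinner_vec x y + cinner_vec x z"
  unfolding cinner_vec_def by (simp add: distrib_left sum.distrib)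
lemma cinner_add_left: "cinner_vec (x + y) z = cinner_vec x z + cinner_vec y z"
  unfolding cinner_vec_def by (simp add: distrib_right sum.distrib)
lemma cinner_diff_right: "cinner_vec x (y - z) = cinner_vec x y - cinner_vec x z"
  unfolding cinner_vec_def by (simp add: right_diff_distrib sum_subtractf)
lemma cinner_diff_left: "cinner_vec (x - y) z = cinner_vec x z - cinner_vec y z"
  unfolding cinner_vec_def by (simp add: left_diff_distrib sum_subtractf)
lemma cinner_scale_right: "cinner_vec x (c *s y) = c * cinner_vec x y"
  unfolding cinner_vec_def by (simp add: sum_distrib_left algebra_simps)
lemma cinner_scale_left: "cinner_vec (c *s x) y = cnj c * cinner_vec x y"
  unfolding cinner_vec_def by (simp add: sum_distrib_left algebra_simps)
lemma scaleR_vec_cscale: "c *\<^sub>R (y::complex^'n) = complex_of_real c *s y"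
  apply (rule iffD2[OF vec_eq_iff], rule allI)
  apply (subst vector_scaleR_component)
  apply (simp add: scaleR_conv_of_real)
  done
lemma cinner_scaleR_right: "cinner_vec x (c *\<^sub>R y) = of_real c * cinner_vec x y"
  by (simp add: scaleR_vec_cscale cinner_scale_right)
lemma cinner_scaleR_left: "cinner_vec (c *\<^sub>R x) y = of_real c * cinner_vec x y"
  by (simp add: scaleR_vec_cscale cinner_scale_left)
lemma cinner_sum_right: "finite A \<Longrightarrow> cinner_vec x (sum f A) = (\<Sum>a\<in>A. cinner_vec x (f a))"
  by (induction A rule: finite_induct) (simp_all add: cinner_add_right)
lemma cinner_sum_left: "finite A \<Longrightarrow> cinner_vec (sum f A) y = (\<Sum>a\<in>A. cinner_vec (f a) y)"
  by (induction A rule: finite_induct) (simp_all add: cinner_add_left)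
lemma cinner_commute: "cinner_vec y x = cnj (cinner_vec x y)"
  unfolding cinner_vec_def by (simp add: mult.commute)

lemma Re_cinner: "Re (cinner_vec x y) = x \<bullet> y"
  unfolding cinner_vec_def inner_vec_def inner_complex_def by (simp add: Re_sum)

lemma Im_cinner: "Im (cinner_vec x y) = (\<i> *s x) \<bullet> y"
  unfolding cinner_vec_def inner_vec_def inner_complex_def by (simp add: Im_sum)

lemma cinner_eq_inner_ii: "cinner_vec x y = Complex (x \<bullet> y) ((\<i> *s x) \<bullet> y)"
  by (metis Im_cinner Re_cinner complex_surj)

lemma cinner_self: "cinner_vec x x = of_real (x \<bullet> x)"
proof -
  have "Im (cinner_vec x x) = 0" unfolding cinner_vec_def
    by (simp add: Im_sum algebra_simps)
  then show ?thesis using Re_cinner[of x x] by (simp add: complex_eq_iff)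
qed

lemma cinner_self_eq_0: "cinner_vec x x = 0 \<longleftrightarrow> x = 0"
  using cinner_self[of x] by simp

lemma cinner_vec_0_iff: "(\<forall>y\<in>S. cinner_vec y x = 0) \<longleftrightarrow> (\<forall>y\<in>S. y \<bullet> x = 0 \<and> (\<i> *s y) \<bullet> x = 0)"
  using cinner_eq_inner_ii by (metis complex.inject zero_complex.code)

lemma self_adjoint_cinner:
  assumes "self_adjoint B"
  shows "cinner_vec x (B *v y) = cinner_vec (B *v x) y"
proof -
  have B: "cnj (B $ j $ i) = B $ i $ j" for i j
    using assms unfolding self_adjoint_def adjoint_mat_def by (metis vec_lambda_beta)
  have "cinner_vec x (B *v y) = (\<Sum>i\<in>UNIV. \<Sum>j\<in>UNIV. cnj (x $ i) * B $ i $ j * y $ j)"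
    unfolding cinner_vec_def matrix_vector_mult_def by (simp add: sum_distrib_left mult.assoc)
  also have "\<dots> = (\<Sum>j\<in>UNIV. \<Sum>i\<in>UNIV. cnj (x $ i) * B $ i $ j * y $ j)" by (rule sum.swap)
  also have "\<dots> = (\<Sum>j\<in>UNIV. \<Sum>i\<in>UNIV. cnj (B $ j $ i * x $ i) * y $ j)"
    by (intro sum.cong refl) (simp add: B mult.commute mult.left_commute)
  also have "\<dots> = cinner_vec (B *v x) y"
    unfolding cinner_vec_def matrix_vector_mult_def
    by (simp add: sum_distrib_right cnj_sum)
  finally show ?thesis .
qed

lemma self_adjoint_cinner_real:
  assumes "self_adjoint B"
  shows "cinner_vec x (B *v x) = of_real (Re (cinner_vec x (B *v x)))"
proof -
  have "cinner_vec x (B *v x) = cnj (cinner_vec x (B *v x))"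
    using self_adjoint_cinner[OF assms, of x x] cinner_commute[of x "B *v x"] by simp
  then show ?thesis by (metis Reals_cnj_iff complex_is_Real_iff of_real_Re)
qed




lemma csubspace_0: "csubspace C \<Longrightarrow> 0 \<in> C" unfolding csubspace_def by auto
lemma csubspace_add: "csubspace C \<Longrightarrow> x \<in> C \<Longrightarrow> y \<in> C \<Longrightarrow> x + y \<in> C" unfolding csubspace_def by auto
lemma csubspace_scale: "csubspace C \<Longrightarrow> x \<in> C \<Longrightarrow> c *s x \<in> C" unfolding csubspace_def by auto
lemma csubspace_scaleR: "csubspace C \<Longrightarrow> x \<in> C \<Longrightarrow> c *\<^sub>R x \<in> C"
  by (simp add: scaleR_vec_cscale csubspace_scale)
lemma csubspace_neg: "csubspace C \<Longrightarrow> x \<in> C \<Longrightarrow> - x \<in> C"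
  using csubspace_scaleR[of C x "-1"] by simp
lemma csubspace_diff: "csubspace C \<Longrightarrow> x \<in> C \<Longrightarrow> y \<in> C \<Longrightarrow> x - y \<in> C"
  using csubspace_add[of C x "- y"] csubspace_neg[of C y] by simp
lemma csubspace_sum:
  assumes "csubspace C" "finite A" "\<And>a. a \<in> A \<Longrightarrow> f a \<in> C" shows "sum f A \<in> C"
  using assms(2,3) by (induction A rule: finite_induct) (auto intro: csubspace_add[OF assms(1)] csubspace_0[OF assms(1)])
lemma csubspace_subspace: "csubspace C \<Longrightarrow> subspace C"
  unfolding subspace_def using csubspace_0 csubspace_add csubspace_scaleR by blast

lemma cinner_orth_imp_zero: "cinner_vec d d = 0 \<Longrightarrow> d = 0"
  using cinner_self_eq_0 by blast

lemma orth_proj_eq: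
  assumes C: "csubspace C"
    and P: "\<forall>v. P *v v \<in> C \<and> (\<forall>w\<in>C. cinner_vec w (v - P *v v) = 0)"
  shows "orth_proj C = P"
  unfolding orth_proj_def
proof (rule the_equality)
  show "\<forall>v. P *v v \<in> C \<and> (\<forall>w\<in>C. cinner_vec w (v - P *v v) = 0)" by (rule P)
next
  fix P' assume P': "\<forall>v. P' *v v \<in> C \<and> (\<forall>w\<in>C. cinner_vec w (v - P' *v v) = 0)"
  show "P' = P"
  proof (subst matrix_eq, intro allI)
    fix v
    define d where "d = P *v v - P' *v v"
    have dC: "d \<in> C" unfolding d_def using P P' C by (blast intro: csubspace_diff)
    have "cinner_vec d d = cinner_vec d (v - P' *v v) - cinner_vec d (v - P *v v)"
      unfolding d_def by (simp add: cinner_diff_right)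
    also have "\<dots> = 0" using P P' dC by simp
    finally have "d = 0" by (rule cinner_orth_imp_zero)
    then show "P' *v v = P *v v" unfolding d_def by simp
  qed
qed

lemma orth_proj_exists:
  assumes C: "csubspace C"
  shows "\<exists>P. \<forall>v. P *v v \<in> C \<and> (\<forall>w\<in>C. cinner_vec w (v - P *v v) = 0)"
proof -
  have sC: "subspace C" using csubspace_subspace[OF C] .
  have spanC: "span C = C" using span_eq_iff sC by blast
  define good where "good v y \<longleftrightarrow> y \<in> C \<and> (\<forall>w\<in>C. cinner_vec w (v - y) = 0)" for v y
  have ex: "\<exists>y. good v y" for v
  proof -
    obtain y z where yz: "y \<in> span C" "\<And>w. w \<in> span C \<Longrightarrow> orthogonal z w" "v = y + z"
      using orthogonal_subspace_decomp_exists[of C v] by blast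
    have "cinner_vec w (v - y) = 0" if w: "w \<in> C" for w
    proof -
      have "z \<bullet> w = 0" "z \<bullet> (\<i> *s w) = 0"
        using yz(2) w csubspace_scale[OF C w, of \<i>] spanC unfolding orthogonal_def by auto
      then have "w \<bullet> z = 0" "(\<i> *s w) \<bullet> z = 0" by (simp_all add: inner_commute)
      then show ?thesis using yz(3) cinner_eq_inner_ii[of w z] by (simp add: Complex_eq_0)
    qed
    then show ?thesis unfolding good_def using yz(1) spanC by auto
  qed
  have uniq: "y1 = y2" if "good v y1" "good v y2" for v y1 y2
  proof -
    define d where "d = y1 - y2"
    have dC: "d \<in> C" unfolding d_def using that C unfolding good_def by (blast intro: csubspace_diff)
    have "cinner_vec d d = cinner_vec d (v - y2) - cinner_vec d (v - y1)"
      unfolding d_def by (simp add: cinner_diff_right)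
    also have "\<dots> = 0" using that dC unfolding good_def by simp
    finally have "d = 0" by (rule cinner_orth_imp_zero)
    then show ?thesis unfolding d_def by simp
  qed
  define pr where "pr v = (SOME y. good v y)" for v
  have pr: "good v (pr v)" for v unfolding pr_def using ex by (rule someI_ex)
  have pr_add: "pr (a + b) = pr a + pr b" for a b
  proof (rule uniq[OF pr])
    show "good (a + b) (pr a + pr b)" using pr[of a] pr[of b] C unfolding good_def
      by (auto intro: csubspace_add simp: cinner_diff_right cinner_add_right)
  qed
  have pr_scale: "pr (c *s a) = c *s pr a" for c a
  proof (rule uniq[OF pr])
    have "c *s a - c *s pr a = c *s (a - pr a)" by (simp add: vector_ssub_ldistrib)
    then show "good (c *s a) (c *s pr a)" using pr[of a] C unfolding good_def
      by (auto intro: csubspace_scale simp: cinner_scale_right cinner_diff_right[symmetric]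
          simp del: vector_ssub_ldistrib)
  qed
  have pr0: "pr 0 = 0" using pr_scale[of 0 0] by simp
  have pr_sum: "pr (sum f A) = (\<Sum>a\<in>A. pr (f a))" if "finite A" for f :: "'b \<Rightarrow> complex^'a" and A
    using that by (induction A rule: finite_induct) (simp_all add: pr0 pr_add)
  define P where "P = (\<chi> i j. pr (axis j 1) $ i)"
  have Pv: "P *v v = pr v" for v
  proof -
    have v: "v = (\<Sum>j\<in>UNIV. v $ j *s axis j 1)"
      by (simp add: vec_eq_iff sum_component axis_def) (simp add: if_distrib cong: if_cong)
    have "pr v = (\<Sum>j\<in>UNIV. v $ j *s pr (axis j 1))"
      by (subst v) (simp add: pr_sum pr_scale)
    also have "\<dots> = P *v v"
      unfolding P_def by (simp add: vec_eq_iff matrix_vector_mult_def sum_component mult.commute)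
    finally show ?thesis by simp
  qed
  show ?thesis using pr Pv unfolding good_def by (intro exI[of _ P]) auto
qed

lemma orth_proj_prop:
  assumes "csubspace C"
  shows "orth_proj C *v v \<in> C" "\<forall>w\<in>C. cinner_vec w (v - orth_proj C *v v) = 0"
proof -
  obtain P where P: "\<forall>v. P *v v \<in> C \<and> (\<forall>w\<in>C. cinner_vec w (v - P *v v) = 0)"
    using orth_proj_exists[OF assms] by blast
  have "orth_proj C = P" by (rule orth_proj_eq[OF assms P])
  then show "orth_proj C *v v \<in> C" "\<forall>w\<in>C. cinner_vec w (v - orth_proj C *v v) = 0" using P by auto
qed

lemma csubspace_UNIV: "csubspace UNIV" unfolding csubspace_def by auto
lemma csubspace_zero: "csubspace {0}" unfolding csubspace_def by auto

lemma orth_proj_UNIV: "orth_proj UNIV = mat 1"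
  by (rule orth_proj_eq[OF csubspace_UNIV]) (simp add: matrix_vector_mul_lid)

lemma orth_proj_zero: "orth_proj {0} = 0"
  by (rule orth_proj_eq[OF csubspace_zero]) simp




definition outer :: "complex^'n \<Rightarrow> complex^'n^'n" where
  "outer a = (\<chi> i k. a $ i * cnj (a $ k))"

lemma outer_mult: "outer a *v y = cinner_vec a y *s a"
  unfolding outer_def cinner_vec_def
  by (simp add: vec_eq_iff matrix_vector_mult_def sum_distrib_left mult.commute mult.left_commute)

lemma sum_matrix_vector: "finite A \<Longrightarrow> (sum f A) *v y = (\<Sum>a\<in>A. f a *v y)"
  by (induction A rule: finite_induct) (simp_all add: matrix_vector_mult_add_rdistrib)

lemma orth_proj_orthonormal:
  fixes v :: "nat \<Rightarrow> complex^'n"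
  assumes on: "\<And>j l. j < r \<Longrightarrow> l < r \<Longrightarrow> cinner_vec (v j) (v l) = (if j = l then 1 else 0)"
    and C: "C = {x. \<exists>c. x = (\<Sum>j<r. c j *s v j)}"
  shows "csubspace C" "orth_proj C = (\<Sum>j<r. outer (v j))"
    "orth_proj C *v x = (\<Sum>j<r. cinner_vec (v j) x *s v j)"
proof -
  show cs: "csubspace C" unfolding csubspace_def C
  proof (intro conjI ballI allI)
    show "0 \<in> {x. \<exists>c. x = (\<Sum>j<r. c j *s v j)}" by (rule CollectI, rule exI[of _ "\<lambda>_. 0"]) simp
  next
    fix x y assume "x \<in> {x. \<exists>c. x = (\<Sum>j<r. c j *s v j)}" "y \<in> {x. \<exists>c. x = (\<Sum>j<r. c j *s v j)}"
    then obtain c1 c2 where "x = (\<Sum>j<r. c1 j *s v j)" "y = (\<Sum>j<r. c2 j *s v j)" by auto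
    then have "x + y = (\<Sum>j<r. (c1 j + c2 j) *s v j)" by (simp add: sum.distrib vector_sadd_rdistrib)
    then show "x + y \<in> {x. \<exists>c. x = (\<Sum>j<r. c j *s v j)}" unfolding mem_Collect_eq by (rule exI[of _ "\<lambda>j. c1 j + c2 j"])
  next
    fix a x assume "x \<in> {x. \<exists>c. x = (\<Sum>j<r. c j *s v j)}"
    then obtain c1 where "x = (\<Sum>j<r. c1 j *s v j)" by auto
    then have "a *s x = (\<Sum>j<r. (a * c1 j) *s v j)"
      by (simp add: vec_eq_iff sum_component sum_distrib_left mult.assoc)
    then show "a *s x \<in> {x. \<exists>c. x = (\<Sum>j<r. c j *s v j)}" unfolding mem_Collect_eq by (rule exI[of _ "\<lambda>j. a * c1 j"])
  qed
  define P where "P = (\<Sum>j<r. outer (v j))"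
  have Pv: "P *v x = (\<Sum>j<r. cinner_vec (v j) x *s v j)" for x
    unfolding P_def by (simp add: sum_matrix_vector outer_mult)
  have vPx: "cinner_vec (v l) (P *v x) = cinner_vec (v l) x" if l: "l < r" for l x
  proof -
    have "cinner_vec (v l) (P *v x) = (\<Sum>j<r. cinner_vec (v j) x * cinner_vec (v l) (v j))"
      unfolding Pv by (simp add: cinner_sum_right cinner_scale_right)
    also have "\<dots> = (\<Sum>j<r. if j = l then cinner_vec (v j) x else 0)"
      by (intro sum.cong refl) (simp add: on l)
    also have "\<dots> = cinner_vec (v l) x" using l by simp
    finally show ?thesis .
  qed
  have "orth_proj C = P"
  proof (rule orth_proj_eq[OF cs], intro allI conjI ballI)
    fix x
    show "P *v x \<in> C" unfolding Pv C mem_Collect_eq by (rule exI[of _ "\<lambda>j. cinner_vec (v j) x"]) (rule refl)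
    fix w assume "w \<in> C"
    then obtain c where w: "w = (\<Sum>j<r. c j *s v j)" unfolding C by auto
    have "cinner_vec w (x - P *v x) = (\<Sum>j<r. cnj (c j) * cinner_vec (v j) (x - P *v x))"
      unfolding w by (simp add: cinner_sum_left cinner_scale_left)
    also have "\<dots> = 0" by (simp add: cinner_diff_right vPx)
    finally show "cinner_vec w (x - P *v x) = 0" .
  qed
  then show "orth_proj C = (\<Sum>j<r. outer (v j))" "orth_proj C *v x = (\<Sum>j<r. cinner_vec (v j) x *s v j)"
    using Pv unfolding P_def by auto
qed

lemma orth_proj_split:
  assumes W: "csubspace W" and Cs: "csubspace C" and CW: "C \<subseteq> W"
    and W': "W' = {x\<in>W. \<forall>y\<in>C. cinner_vec y x = 0}"
  shows "csubspace W'" "orth_proj W = orth_proj C + orth_proj W'"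
proof -
  show cs: "csubspace W'" unfolding csubspace_def W'
    using W by (auto intro: csubspace_0 csubspace_add csubspace_scale simp: cinner_add_right cinner_scale_right)
  show "orth_proj W = orth_proj C + orth_proj W'"
  proof (rule orth_proj_eq[OF W], intro allI conjI ballI)
    fix v
    have "orth_proj C *v v \<in> W" using orth_proj_prop(1)[OF Cs] CW by blast
    moreover have "orth_proj W' *v v \<in> W" using orth_proj_prop(1)[OF cs] W' by blast
    ultimately show "(orth_proj C + orth_proj W') *v v \<in> W"
      by (simp add: matrix_vector_mult_add_rdistrib csubspace_add[OF W])
    fix w assume wW: "w \<in> W"
    let ?c = "orth_proj C *v w"
    have cC: "?c \<in> C" by (rule orth_proj_prop(1)[OF Cs])
    have dW': "w - ?c \<in> W'"
    proof -
      have "w - ?c \<in> W" using wW cC CW by (blast intro: csubspace_diff[OF W])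
      moreover have "\<forall>y\<in>C. cinner_vec y (w - ?c) = 0" using orth_proj_prop(2)[OF Cs] by blast
      ultimately show ?thesis unfolding W' by blast
    qed
    have pW': "orth_proj W' *v v \<in> W'" by (rule orth_proj_prop(1)[OF cs])
    have pC: "orth_proj C *v v \<in> C" by (rule orth_proj_prop(1)[OF Cs])
    have t1: "cinner_vec ?c (v - (orth_proj C + orth_proj W') *v v) = 0"
    proof -
      have "cinner_vec ?c (v - orth_proj C *v v) = 0" using orth_proj_prop(2)[OF Cs] cC by blast
      moreover have "cinner_vec ?c (orth_proj W' *v v) = 0" using pW' cC unfolding W' by blast
      ultimately show ?thesis by (simp add: matrix_vector_mult_add_rdistrib cinner_diff_right cinner_add_right algebra_simps)
    qed
    have t2: "cinner_vec (w - ?c) (v - (orth_proj C + orth_proj W') *v v) = 0"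
    proof -
      have "cinner_vec (w - ?c) (v - orth_proj W' *v v) = 0" using orth_proj_prop(2)[OF cs] dW' by blast
      moreover have "cinner_vec (orth_proj C *v v) (w - ?c) = 0" using dW' pC unfolding W' by blast
      then have "cinner_vec (w - ?c) (orth_proj C *v v) = 0" using cinner_commute by (metis complex_cnj_zero)
      ultimately show ?thesis by (simp add: matrix_vector_mult_add_rdistrib cinner_diff_right cinner_add_right algebra_simps)
    qed
    have "w = ?c + (w - ?c)" by simp
    then have "cinner_vec w (v - (orth_proj C + orth_proj W') *v v)
       = cinner_vec ?c (v - (orth_proj C + orth_proj W') *v v) + cinner_vec (w - ?c) (v - (orth_proj C + orth_proj W') *v v)"
      by (metis cinner_add_left)
    then show "cinner_vec w (v - (orth_proj C + orth_proj W') *v v) = 0" using t1 t2 by simp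
  qed
qed




lemma dim_orth_inter:
  fixes W :: "'a::euclidean_space set" and V :: "'a set"
  assumes W: "subspace W" and V: "finite V"
  shows "dim W \<le> dim {x\<in>W. \<forall>v\<in>V. v \<bullet> x = 0} + card V"
proof -
  define T where "T = {y. \<forall>x\<in>span V. x \<bullet> y = 0}"
  have sT: "subspace T" unfolding T_def subspace_def by (auto simp: inner_add_right)
  have "dim {y \<in> UNIV. \<forall>x\<in>span V. orthogonal x y} + dim (span V) = dim (UNIV :: 'a set)"
    by (rule dim_subspace_orthogonal_to_vectors) auto
  then have dT: "dim T + dim (span V) = DIM('a)" unfolding T_def orthogonal_def by simp
  have dV: "dim (span V) \<le> card V" using dim_le_card' V by simp
  have "dim {x + y |x y. x \<in> W \<and> y \<in> T} + dim (W \<inter> T) = dim W + dim T"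
    by (rule dim_sums_Int[OF W sT])
  moreover have "dim {x + y |x y. x \<in> W \<and> y \<in> T} \<le> DIM('a)" by (rule dim_subset_UNIV)
  ultimately have "dim W \<le> dim (W \<inter> T) + card V" using dT dV by linarith
  moreover have "W \<inter> T \<subseteq> {x\<in>W. \<forall>v\<in>V. v \<bullet> x = 0}" unfolding T_def using span_base by blast
  then have "dim (W \<inter> T) \<le> dim {x\<in>W. \<forall>v\<in>V. v \<bullet> x = 0}" by (rule dim_subset)
  ultimately show ?thesis by linarith
qed

lemma greedy:
  fixes W :: "(complex^'n) set" and Bs :: "(complex^'n^'n) set"
  assumes W: "subspace W" and Bs: "finite Bs" "\<forall>B\<in>Bs. self_adjoint B"
  shows "2 * card Bs * (K - 1) < dim W \<Longrightarrow> \<exists>u. (\<forall>a<K. u a \<in> W \<and> cinner_vec (u a) (u a) = 1) \<and>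
     (\<forall>a<K. \<forall>b<K. a \<noteq> b \<longrightarrow> (\<forall>B\<in>Bs. cinner_vec (u a) (B *v u b) = 0))"
proof (induction K)
  case 0
  then show ?case by auto
next
  case (Suc K)
  have "2 * card Bs * (K - 1) < dim W"
    using Suc.prems by (metis diff_Suc_1 diff_le_self le_less_trans mult_le_mono2 order_le_less_trans)
  then obtain u where u: "\<forall>a<K. u a \<in> W \<and> cinner_vec (u a) (u a) = 1"
    "\<forall>a<K. \<forall>b<K. a \<noteq> b \<longrightarrow> (\<forall>B\<in>Bs. cinner_vec (u a) (B *v u b) = 0)"
    using Suc.IH by blast
  define V where "V = (\<lambda>(a, B). B *v u a) ` ({..<K} \<times> Bs) \<union> (\<lambda>(a, B). \<i> *s (B *v u a)) ` ({..<K} \<times> Bs)"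
  have finV: "finite V" unfolding V_def using Bs by auto
  have cardV: "card V \<le> 2 * card Bs * K"
  proof -
    have "card V \<le> card ((\<lambda>(a, B). B *v u a) ` ({..<K} \<times> Bs)) + card ((\<lambda>(a, B). \<i> *s (B *v u a)) ` ({..<K} \<times> Bs))"
      unfolding V_def by (rule card_Un_le)
    also have "\<dots> \<le> card ({..<K} \<times> Bs) + card ({..<K} \<times> Bs)"
      by (intro add_mono card_image_le) (use Bs in auto)
    also have "\<dots> = 2 * card Bs * K" by (simp add: card_cartesian_product)
    finally show ?thesis .
  qed
  define R where "R = {x\<in>W. \<forall>v\<in>V. v \<bullet> x = 0}"
  have "dim W \<le> dim R + card V" unfolding R_def by (rule dim_orth_inter[OF W finV])
  moreover have "2 * card Bs * K < dim W" using Suc.prems by simp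
  ultimately have "dim R > 0" using cardV by linarith
  then obtain x where xR: "x \<in> R" and x0: "x \<noteq> 0"
  proof -
    have "\<not> R \<subseteq> {0}" using \<open>dim R > 0\<close> by (metis dim_eq_0 less_irrefl)
    then show ?thesis using that by blast
  qed
  define y where "y = (1 / norm x) *\<^sub>R x"
  have yW: "y \<in> W" unfolding y_def using xR W unfolding R_def by (auto intro: subspace_scale)
  have yy: "cinner_vec y y = 1"
  proof -
    have "y \<bullet> y = 1" unfolding y_def using x0 by (simp add: inner_commute power2_norm_eq_inner[symmetric] power2_eq_square)
    then show ?thesis by (simp add: cinner_self)
  qed
  have orth1: "cinner_vec (B *v u a) y = 0" if "a < K" "B \<in> Bs" for a B
  proof -
    have "(B *v u a) \<bullet> x = 0" "(\<i> *s (B *v u a)) \<bullet> x = 0"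
      using xR that unfolding R_def V_def by auto
    then have "cinner_vec (B *v u a) x = 0" by (simp add: cinner_eq_inner_ii Complex_eq_0)
    then show ?thesis unfolding y_def by (simp add: cinner_scaleR_right)
  qed
  have orth2: "cinner_vec (u a) (B *v y) = 0" if "a < K" "B \<in> Bs" for a B
    using orth1[OF that] self_adjoint_cinner[of B "u a" y] Bs(2) that by simp
  have orth3: "cinner_vec y (B *v u a) = 0" if "a < K" "B \<in> Bs" for a B
  proof -
    have "cinner_vec y (B *v u a) = cinner_vec (B *v y) (u a)" using self_adjoint_cinner Bs(2) that by blast
    also have "\<dots> = cnj (cinner_vec (u a) (B *v y))" by (rule cinner_commute)
    finally show ?thesis using orth2[OF that] by simp
  qed
  define u' where "u' = u(K := y)"
  show ?case
  proof (rule exI[of _ u'], intro conjI allI impI ballI)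
    fix a assume "a < Suc K"
    then show "u' a \<in> W" "cinner_vec (u' a) (u' a) = 1" unfolding u'_def using u yW yy by auto
  next
    fix a b B assume ab: "a < Suc K" "b < Suc K" "a \<noteq> b" and B: "B \<in> Bs"
    show "cinner_vec (u' a) (B *v u' b) = 0"
    proof (cases "a = K")
      case True then have "b < K" using ab by simp
      then show ?thesis using True orth3 B unfolding u'_def by simp
    next
      case False
      then have aK: "a < K" using ab by simp
      show ?thesis
      proof (cases "b = K")
        case True then show ?thesis using aK orth2 B False unfolding u'_def by simp
      next
        case False then show ?thesis using aK ab u(2) B \<open>a \<noteq> K\<close> unfolding u'_def by simp
      qed
    qed
  qed
qed




lemma code_from_vectors:
  fixes E :: "(complex^'n^'n) set" and v :: "nat \<Rightarrow> complex^'n" and e :: "complex^'n^'n"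
  assumes vv: "\<And>B j l. B \<in> E \<Longrightarrow> j < r \<Longrightarrow> l < r \<Longrightarrow>
       cinner_vec (v j) (B *v v l) = (if j = l then of_real (e \<bullet> B) else 0)"
    and I: "mat 1 \<in> E" "e \<bullet> mat 1 = 1"
    and W: "csubspace W" and vW: "\<And>j. j < r \<Longrightarrow> v j \<in> W"
  shows "\<exists>C. is_code E C \<and> csubspace C \<and> C \<subseteq> W \<and> 2 * r \<le> dim C"
proof -
  have on: "cinner_vec (v j) (v l) = (if j = l then 1 else 0)" if "j < r" "l < r" for j l
    using vv[OF I(1) that] I(2) by (simp add: matrix_vector_mul_lid)
  define C where "C = {x. \<exists>c. x = (\<Sum>j<r. c j *s v j)}"
  have Cs: "csubspace C" and Pv: "\<And>x. orth_proj C *v x = (\<Sum>j<r. cinner_vec (v j) x *s v j)"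
    using orth_proj_orthonormal[OF on C_def] by auto
  have CW: "C \<subseteq> W"
  proof
    fix x assume "x \<in> C"
    then obtain c where "x = (\<Sum>j<r. c j *s v j)" unfolding C_def by auto
    then show "x \<in> W" using vW by (auto intro!: csubspace_sum[OF W] csubspace_scale[OF W])
  qed
  have vC: "v j \<in> C" if "j < r" for j
  proof -
    have "(\<Sum>l<r. (if l = j then 1 else 0) *s v l) = (\<Sum>l<r. if l = j then v l else 0)"
      by (intro sum.cong refl) auto
    also have "\<dots> = v j" using that by simp
    finally have "v j = (\<Sum>l<r. (if l = j then 1 else 0) *s v l)" by simp
    then show ?thesis unfolding C_def mem_Collect_eq by (rule exI[of _ "\<lambda>l. if l = j then 1 else 0"])
  qed
  have code: "is_code E C"
    unfolding is_code_def
  proof (intro conjI Cs exI[of _ "\<lambda>B. e \<bullet> B"] ballI)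
    fix A assume A: "A \<in> E"
    show "orth_proj C ** A ** orth_proj C = (e \<bullet> A) *\<^sub>R orth_proj C"
    proof (subst matrix_eq, intro allI)
      fix x
      have "A *v (orth_proj C *v x) = (\<Sum>l<r. cinner_vec (v l) x *s (A *v v l))"
        unfolding Pv by (simp add: vec.sum vector_scalar_commute)
      then have inn: "cinner_vec (v j) (A *v (orth_proj C *v x)) = of_real (e \<bullet> A) * cinner_vec (v j) x"
        if j: "j < r" for j
      proof -
        assume eq: "A *v (orth_proj C *v x) = (\<Sum>l<r. cinner_vec (v l) x *s (A *v v l))"
        have "cinner_vec (v j) (A *v (orth_proj C *v x)) = (\<Sum>l<r. cinner_vec (v l) x * cinner_vec (v j) (A *v v l))"
          unfolding eq by (simp add: cinner_sum_right cinner_scale_right)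
        also have "\<dots> = (\<Sum>l<r. if l = j then cinner_vec (v l) x * of_real (e \<bullet> A) else 0)"
          by (intro sum.cong refl) (simp add: vv[OF A j])
        also have "\<dots> = of_real (e \<bullet> A) * cinner_vec (v j) x" using j by simp
        finally show ?thesis .
      qed
      have "(orth_proj C ** A ** orth_proj C) *v x = orth_proj C *v (A *v (orth_proj C *v x))"
        by (simp add: matrix_vector_mul_assoc matrix_mul_assoc)
      also have "\<dots> = (\<Sum>j<r. (of_real (e \<bullet> A) * cinner_vec (v j) x) *s v j)"
        unfolding Pv[of "A *v (orth_proj C *v x)"] by (intro sum.cong refl) (simp add: inn)
      also have "\<dots> = (e \<bullet> A) *\<^sub>R (orth_proj C *v x)"
        unfolding Pv by (simp add: scaleR_vec_cscale vec_eq_iff sum_component sum_distrib_left mult.assoc)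
      also have "\<dots> = ((e \<bullet> A) *\<^sub>R orth_proj C) *v x" by (simp add: vec_eq_iff matrix_vector_mult_def scaleR_sum_right mult_scaleR_left)
      finally show "(orth_proj C ** A ** orth_proj C) *v x = ((e \<bullet> A) *\<^sub>R orth_proj C) *v x" .
    qed
  qed
  define S where "S = v ` {..<r} \<union> (\<lambda>j. \<i> *s v j) ` {..<r}"
  have dots: "v j \<bullet> v l = (if j = l then 1 else 0)" "(\<i> *s v j) \<bullet> v l = 0" "v j \<bullet> (\<i> *s v l) = 0"
    "(\<i> *s v j) \<bullet> (\<i> *s v l) = (if j = l then 1 else 0)" if "j < r" "l < r" for j l
    using on[OF that] by (simp_all add: Re_cinner[symmetric] cinner_scale_left cinner_scale_right)
  have injv: "inj_on v {..<r}" unfolding inj_on_def using dots(1) by (metis lessThan_iff zero_neq_one)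
  have injiv: "inj_on (\<lambda>j. \<i> *s v j) {..<r}" unfolding inj_on_def using dots(4) by (metis lessThan_iff zero_neq_one)
  have disj: "v ` {..<r} \<inter> (\<lambda>j. \<i> *s v j) ` {..<r} = {}"
    using dots(1,2) by (auto) (metis zero_neq_one)
  have cardS: "card S = 2 * r"
    unfolding S_def using card_Un_disjoint[OF _ _ disj] card_image[OF injv] card_image[OF injiv] by simp
  have SC: "S \<subseteq> C" unfolding S_def using vC csubspace_scale[OF Cs] by auto
  have "pairwise orthogonal S"
    unfolding pairwise_def orthogonal_def S_def using dots by auto
  moreover have "0 \<notin> S" unfolding S_def using dots(1,4) by (auto) (metis inner_zero_left zero_neq_one)+
  ultimately have "independent S" by (rule pairwise_orthogonal_independent)
  then have "card S \<le> dim C" using independent_card_le_dim[OF SC] by blast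
  then show ?thesis using code Cs CW cardS by auto
qed




lemma outer_inner: "outer u \<bullet> B = Re (cinner_vec u (B *v u))"
proof -
  have "outer u \<bullet> B = (\<Sum>i\<in>UNIV. \<Sum>k\<in>UNIV. Re (cnj (u $ i) * u $ k * B $ i $ k))"
    unfolding outer_def inner_vec_def inner_complex_def by (simp add: algebra_simps)
  also have "\<dots> = Re (cinner_vec u (B *v u))"
    unfolding cinner_vec_def matrix_vector_mult_def by (simp add: Re_sum sum_distrib_left algebra_simps)
  finally show ?thesis .
qed

lemma zero_matrix_vector: "(0::complex^'n^'n) *v x = 0"
  by (simp add: vec_eq_iff matrix_vector_mult_def)

lemma scaleR_matrix_vector_c: "((c::real) *\<^sub>R (B::complex^'n^'n)) *v x = c *\<^sub>R (B *v x)"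
  by (simp add: vec_eq_iff matrix_vector_mult_def scaleR_sum_right mult_scaleR_left)

lemma span_cinner_zero:
  fixes Bs :: "(complex^'n^'n) set"
  assumes "B \<in> span Bs" "\<And>B. B \<in> Bs \<Longrightarrow> cinner_vec x (B *v y) = 0"
  shows "cinner_vec x (B *v y) = 0"
proof (rule span_induct[OF assms(1)])
  show "subspace {B. cinner_vec x (B *v y) = 0}"
    unfolding subspace_def
    by (simp add: zero_matrix_vector matrix_vector_mult_add_rdistrib cinner_add_right
        scaleR_matrix_vector_c cinner_scaleR_right)
qed (rule assms(2))

lemma ceil_facts:
  fixes p q :: nat
  assumes "1 \<le> p" "1 \<le> q"
  shows "1 \<le> nat \<lceil>real p / real q\<rceil>" "(nat \<lceil>real p / real q\<rceil> - 1) * q < p"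
    "nat \<lceil>real p / real q\<rceil> \<le> p"
proof -
  have pos: "real p / real q > 0" using assms by simp
  then show "1 \<le> nat \<lceil>real p / real q\<rceil>" by linarith
  have le: "real p / real q \<le> real p" using assms by (simp add: divide_le_eq)
  then show "nat \<lceil>real p / real q\<rceil> \<le> p" by linarith
  have "real (nat \<lceil>real p / real q\<rceil>) < real p / real q + 1" using pos by linarith
  then have "real (nat \<lceil>real p / real q\<rceil> - 1) < real p / real q"
    using \<open>1 \<le> nat \<lceil>real p / real q\<rceil>\<close> by (simp add: of_nat_diff)
  then have "real (nat \<lceil>real p / real q\<rceil> - 1) * real q < real p"
    using assms by (simp add: less_divide_eq)
  then show "(nat \<lceil>real p / real q\<rceil> - 1) * q < p" by (metis of_nat_less_iff of_nat_mult)
qed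




lemma matrix_vector_scaleR_c: "(B::complex^'n^'n) *v (c *\<^sub>R y) = c *\<^sub>R (B *v y)"
  by (simp add: scaleR_vec_cscale vector_scalar_commute)

lemma code_exists:
  fixes E :: "(complex^'n^'n) set" and W :: "(complex^'n) set"
  assumes qg: "quantum_graph E" and W: "csubspace W" and p: "2 * p \<le> dim W" and p1: "1 \<le> p"
  shows "\<exists>C. is_code E C \<and> csubspace C \<and> C \<subseteq> W \<and> 2 * nat \<lceil>real p / real ((dim E)^2)\<rceil> \<le> dim C"
proof -
  have sE: "subspace E" and sa: "\<forall>A\<in>E. self_adjoint A" and I: "mat 1 \<in> E"
    using qg unfolding quantum_graph_def by auto
  define m where "m = dim E"
  have I0: "mat 1 \<noteq> (0::complex^'n^'n)"
  proof
    assume h: "mat 1 = (0::complex^'n^'n)"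
    have "(mat 1 :: complex^'n^'n) $ undefined $ undefined = 1" by (simp add: mat_def)
    then show False using h by simp
  qed
  have m1: "1 \<le> m"
  proof (rule ccontr)
    assume "\<not> 1 \<le> m"
    then have "dim E = 0" unfolding m_def by linarith
    then have "E \<subseteq> {0}" using dim_eq_0 by blast
    then show False using I I0 by auto
  qed
  define q where "q = m ^ 2"
  have q1: "1 \<le> q" unfolding q_def using m1 by simp
  define r where "r = nat \<lceil>real p / real q\<rceil>"
  have r1: "1 \<le> r" and rq: "(r - 1) * q < p" and rp: "r \<le> p"
    using ceil_facts[OF p1 q1] unfolding r_def by auto
  obtain Bs where Bs: "Bs \<subseteq> E" "independent Bs" "E \<subseteq> span Bs" "card Bs = m"
    using basis_exists[of E] unfolding m_def by blast
  have finBs: "finite Bs" using Bs(2) by (simp add: independent_imp_finite)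
  have saBs: "\<forall>B\<in>Bs. self_adjoint B" using Bs(1) sa by auto
  define N where "N = (r - 1) * m + 1"
  have "2 * card Bs * (N - 1) < dim W"
  proof -
    have "2 * card Bs * (N - 1) = 2 * ((r - 1) * q)" unfolding N_def Bs(4) q_def by (simp add: power2_eq_square)
    also have "\<dots> < 2 * p" using rq by simp
    finally show ?thesis using p by simp
  qed
  then obtain u where u: "\<forall>a<N. u a \<in> W \<and> cinner_vec (u a) (u a) = 1"
    and uB: "\<forall>a<N. \<forall>b<N. a \<noteq> b \<longrightarrow> (\<forall>B\<in>Bs. cinner_vec (u a) (B *v u b) = 0)"
    using greedy[OF csubspace_subspace[OF W] finBs saBs] by blast
  have uE: "cinner_vec (u a) (B *v u b) = 0" if "a < N" "b < N" "a \<noteq> b" "B \<in> E" for a b B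
    using span_cinner_zero[of B Bs "u a" "u b"] that uB Bs(3) by blast
  define x where "x a = (SOME y. y \<in> E \<and> (\<forall>B\<in>E. y \<bullet> B = outer (u a) \<bullet> B))" for a
  have x: "x a \<in> E \<and> (\<forall>B\<in>E. x a \<bullet> B = outer (u a) \<bullet> B)" for a
  proof -
    obtain y z where yz: "y \<in> span E" "\<And>w. w \<in> span E \<Longrightarrow> orthogonal z w" "outer (u a) = y + z"
      using orthogonal_subspace_decomp_exists[of E "outer (u a)"] by blast
    have spanE: "span E = E" using span_eq_iff sE by blast
    have "\<forall>B\<in>E. y \<bullet> B = outer (u a) \<bullet> B"
      using yz spanE unfolding orthogonal_def by (simp add: inner_add_left)
    then have "\<exists>y. y \<in> E \<and> (\<forall>B\<in>E. y \<bullet> B = outer (u a) \<bullet> B)" using yz(1) spanE by blast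
    then show ?thesis unfolding x_def by (rule someI_ex)
  qed
  have xB: "cinner_vec (u a) (B *v u a) = of_real (x a \<bullet> B)" if "B \<in> E" for a B
    using x[of a] that self_adjoint_cinner_real[of B "u a"] sa outer_inner[of "u a" B] by simp
  have xc: "x a \<bullet> mat 1 = 1" if "a < N" for a
    using xB[OF I, of a] u that by (simp add: matrix_vector_mul_lid)
  \<comment> \<open>injection for the tensor trick\<close>
  have "DIM(complex^'n) = 2 * CARD('n)" by (simp add: DIM_cart)
  then have "p \<le> CARD('n)" using p dim_subset_UNIV[of W] by linarith
  then have "card {..<r - 1} \<le> card (UNIV :: 'n set)" using rp r1 by simp
  then obtain \<tau> :: "nat \<Rightarrow> 'n" where \<tau>: "inj_on \<tau> {..<r-1}"
    using card_le_inj[of "{..<r-1}" "UNIV :: 'n set"] by auto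
  obtain g w e where gw: "\<forall>a<N. g a < r \<and> 0 \<le> w a"
    and grp: "\<forall>j<r. (\<Sum>a\<in>{a. a < N \<and> g a = j}. w a) = 1 \<and> (\<Sum>a\<in>{a. a < N \<and> g a = j}. w a *\<^sub>R x a) = e"
    using tverberg_lifted[OF sE _ _ _ N_def r1 \<tau>, of x "mat 1"] x xc unfolding m_def by blast
  define G where "G j = {a. a < N \<and> g a = j}" for j
  have finG: "finite (G j)" for j unfolding G_def by simp
  define v where "v j = (\<Sum>a\<in>G j. sqrt (w a) *\<^sub>R u a)" for j
  have vW: "v j \<in> W" for j
    unfolding v_def using u by (intro csubspace_sum[OF W finG] csubspace_scaleR[OF W]) (auto simp: G_def)
  have vv: "cinner_vec (v j) (B *v v l) = (if j = l then of_real (e \<bullet> B) else 0)"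
    if B: "B \<in> E" and j: "j < r" and l: "l < r" for B j l
  proof -
    have "cinner_vec (v j) (B *v v l) = (\<Sum>a\<in>G j. \<Sum>b\<in>G l. of_real (sqrt (w a) * sqrt (w b)) * cinner_vec (u a) (B *v u b))"
    proof -
      have inner: "cinner_vec (u a) (B *v v l) = (\<Sum>b\<in>G l. of_real (sqrt (w b)) * cinner_vec (u a) (B *v u b))" for a
      proof -
        have "B *v v l = (\<Sum>b\<in>G l. sqrt (w b) *\<^sub>R (B *v u b))"
          unfolding v_def by (simp add: vec.sum matrix_vector_scaleR_c)
        then show ?thesis by (simp add: cinner_sum_right[OF finG] cinner_scaleR_right)
      qed
      have "cinner_vec (v j) (B *v v l) = (\<Sum>a\<in>G j. of_real (sqrt (w a)) * cinner_vec (u a) (B *v v l))"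
        unfolding v_def[of j] by (simp add: cinner_sum_left[OF finG] cinner_scaleR_left)
      also have "\<dots> = (\<Sum>a\<in>G j. \<Sum>b\<in>G l. of_real (sqrt (w a) * sqrt (w b)) * cinner_vec (u a) (B *v u b))"
        unfolding inner by (simp add: sum_distrib_left mult.assoc)
      finally show ?thesis .
    qed
    also have "\<dots> = (\<Sum>a\<in>G j. \<Sum>b\<in>G l. if a = b then of_real (w a) * cinner_vec (u a) (B *v u a) else 0)"
    proof (intro sum.cong refl)
      fix a b assume "a \<in> G j" "b \<in> G l"
      then have ab: "a < N" "b < N" "0 \<le> w a" unfolding G_def using gw by auto
      show "of_real (sqrt (w a) * sqrt (w b)) * cinner_vec (u a) (B *v u b) =
            (if a = b then of_real (w a) * cinner_vec (u a) (B *v u a) else 0)"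
      proof (cases "a = b")
        case True
        have "sqrt (w a) * sqrt (w a) = w a" using ab(3) by simp
        then show ?thesis using True by simp
      next
        case False then show ?thesis using uE[OF ab(1,2) False B] by simp
      qed
    qed
    also have "\<dots> = (if j = l then of_real (e \<bullet> B) else 0)"
    proof (cases "j = l")
      case True
      have "(\<Sum>a\<in>G j. \<Sum>b\<in>G l. if a = b then of_real (w a) * cinner_vec (u a) (B *v u a) else 0)
          = (\<Sum>a\<in>G j. of_real (w a) * cinner_vec (u a) (B *v u a))"
        using True finG by (intro sum.cong refl) (simp add: sum.delta)
      also have "\<dots> = (\<Sum>a\<in>G j. of_real (w a * (x a \<bullet> B)))" using xB[OF B] by simp
      also have "\<dots> = of_real ((\<Sum>a\<in>G j. w a *\<^sub>R x a) \<bullet> B)" by (simp add: inner_sum_left)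
      also have "\<dots> = of_real (e \<bullet> B)" using grp j unfolding G_def by simp
      finally show ?thesis using True by simp
    next
      case False
      have "(\<Sum>a\<in>G j. \<Sum>b\<in>G l. if a = b then of_real (w a) * cinner_vec (u a) (B *v u a) else (0::complex)) = 0"
        using False unfolding G_def by (intro sum.neutral ballI) auto
      then show ?thesis using False by simp
    qed
    finally show ?thesis .
  qed
  have e1: "e \<bullet> mat 1 = 1"
  proof -
    have "e = (\<Sum>a\<in>G 0. w a *\<^sub>R x a)" using grp r1 unfolding G_def by simp
    then have "e \<bullet> mat 1 = (\<Sum>a\<in>G 0. w a)" using xc by (simp add: inner_sum_left G_def)
    then show ?thesis using grp r1 unfolding G_def by simp
  qed
  obtain C where "is_code E C" "csubspace C" "C \<subseteq> W" "2 * r \<le> dim C"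
    using code_from_vectors[of E r v e W] vv I e1 W vW by blast
  then show ?thesis unfolding r_def q_def m_def by blast
qed




lemma slog_pos: "1 \<le> p \<Longrightarrow> 1 \<le> q \<Longrightarrow> slog p q = slog (p - nat \<lceil>real p / real q\<rceil>) q + 1"
  by (subst slog.simps) simp

lemma slog_zero: "slog 0 q = 0"
  by (subst slog.simps) simp

lemma div_le_self_real:
  fixes a b :: real assumes "0 \<le> a" "1 \<le> b" shows "a / b \<le> a"
proof -
  have "a * 1 \<le> a * b" using assms by (intro mult_left_mono) auto
  then show ?thesis using assms by (simp add: divide_le_eq)
qed

lemma step_mono:
  fixes p p' q :: nat
  assumes "p' \<le> p" "1 \<le> q"
  shows "p' - nat \<lceil>real p' / real q\<rceil> \<le> p - nat \<lceil>real p / real q\<rceil>"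
proof -
  have "\<lceil>real p / real q\<rceil> = \<lceil>real p' / real q + real (p - p') / real q\<rceil>"
    using assms by (simp add: of_nat_diff add_divide_distrib[symmetric])
  also have "\<dots> \<le> \<lceil>real p' / real q\<rceil> + \<lceil>real (p - p') / real q\<rceil>" by (rule ceiling_add_le)
  also have "\<lceil>real (p - p') / real q\<rceil> \<le> int (p - p')"
  proof -
    have "real (p - p') / real q \<le> real (p - p')" using assms
      by (intro div_le_self_real) auto
    then show ?thesis by (simp add: ceiling_le_iff)
  qed
  finally have c: "\<lceil>real p / real q\<rceil> \<le> \<lceil>real p' / real q\<rceil> + int (p - p')" by simp
  have "real p' / real q \<ge> 0" by simp
  then have "\<lceil>real p' / real q\<rceil> \<ge> 0" by linarith
  moreover have "\<lceil>real p' / real q\<rceil> \<le> int p'"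
  proof -
    have "real p' / real q \<le> real p'" using assms by (intro div_le_self_real) auto
    then show ?thesis by (simp add: ceiling_le_iff)
  qed
  moreover have "\<lceil>real p / real q\<rceil> \<le> int p"
  proof -
    have "real p / real q \<le> real p" using assms by (intro div_le_self_real) auto
    then show ?thesis by (simp add: ceiling_le_iff)
  qed
  moreover have "\<lceil>real p / real q\<rceil> \<ge> 0"
  proof -
    have "real p / real q \<ge> 0" by simp
    then show ?thesis by linarith
  qed
  ultimately show ?thesis using c assms(1) by linarith
qed

lemma slog_mono: "1 \<le> q \<Longrightarrow> p' \<le> p \<Longrightarrow> slog p' q \<le> slog p q"
proof (induction p arbitrary: p' rule: less_induct)
  case (less p)
  show ?case
  proof (cases "p' = 0")
    case True then show ?thesis by (simp add: slog_zero)
  next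
    case False
    then have p'1: "1 \<le> p'" and p1: "1 \<le> p" using less.prems by auto
    have c1: "1 \<le> nat \<lceil>real p / real q\<rceil>" using ceil_facts(1)[OF p1 less.prems(1)] .
    have lt: "p - nat \<lceil>real p / real q\<rceil> < p" using c1 p1 by linarith
    have "slog (p' - nat \<lceil>real p' / real q\<rceil>) q \<le> slog (p - nat \<lceil>real p / real q\<rceil>) q"
      by (rule less.IH[OF lt less.prems(1) step_mono[OF less.prems(2,1)]])
    then show ?thesis using slog_pos[OF p'1 less.prems(1)] slog_pos[OF p1 less.prems(1)] by simp
  qed
qed

lemma dim_ge2:
  assumes W: "csubspace W" and x: "x \<in> W" "x \<noteq> 0"
  shows "2 \<le> dim W"
proof -
  have xx: "x \<bullet> x \<noteq> 0" using x by simp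
  have o: "x \<bullet> (\<i> *s x) = 0"
    using Re_cinner[of x "\<i> *s x"] by (simp add: cinner_scale_right cinner_self)
  have ne: "x \<noteq> \<i> *s x" using o xx by auto
  have o2: "(\<i> *s x) \<bullet> x = 0" using o by (simp add: inner_commute)
  have "pairwise orthogonal {x, \<i> *s x}"
    unfolding pairwise_def orthogonal_def using o o2 by auto
  moreover have "0 \<notin> {x, \<i> *s x}" using x by (auto simp: vec_eq_iff)
  ultimately have "independent {x, \<i> *s x}" by (rule pairwise_orthogonal_independent)
  moreover have "{x, \<i> *s x} \<subseteq> W" using x csubspace_scale[OF W] by auto
  ultimately have "card {x, \<i> *s x} \<le> dim W" using independent_card_le_dim by blast
  then show ?thesis using ne by simp
qed




lemma coloring_rec:
  fixes E :: "(complex^'n^'n) set"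
  assumes qg: "quantum_graph E" and q: "q = (dim E)^2" and q1: "1 \<le> q"
  shows "csubspace W \<Longrightarrow> dim W div 2 = p \<Longrightarrow> \<exists>K. finite K \<and> (\<forall>C\<in>K. is_code E C \<and> C \<subseteq> W \<and> C \<noteq> {0})
     \<and> (\<Sum>C\<in>K. orth_proj C) = orth_proj W \<and> card K \<le> slog p q"
proof (induction p arbitrary: W rule: less_induct)
  case (less p W)
  note W = less.prems(1)
  show ?case
  proof (cases "W \<subseteq> {0}")
    case True
    then have "W = {0}" using csubspace_0[OF W] by auto
    then show ?thesis by (intro exI[of _ "{}"]) (simp add: orth_proj_zero)
  next
    case False
    then obtain x where x: "x \<in> W" "x \<noteq> 0" by auto
    have d2: "2 \<le> dim W" by (rule dim_ge2[OF W x])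
    have p1: "1 \<le> p" using d2 less.prems(2) by linarith
    have p2: "2 * p \<le> dim W" using less.prems(2) by linarith
    define c where "c = nat \<lceil>real p / real q\<rceil>"
    have c1: "1 \<le> c" unfolding c_def using ceil_facts(1)[OF p1 q1] .
    obtain C where C: "is_code E C" "csubspace C" "C \<subseteq> W" "2 * c \<le> dim C"
      using code_exists[OF qg W p2 p1] unfolding c_def q by blast
    define W' where "W' = {x\<in>W. \<forall>y\<in>C. cinner_vec y x = 0}"
    have W's: "csubspace W'" and Psplit: "orth_proj W = orth_proj C + orth_proj W'"
      using orth_proj_split[OF W C(2) C(3) W'_def] by auto
    have "dim {y \<in> W. \<forall>x\<in>C. orthogonal x y} + dim C = dim W"
      by (rule dim_subspace_orthogonal_to_vectors[OF csubspace_subspace[OF C(2)] csubspace_subspace[OF W] C(3)])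
    moreover have "{y \<in> W. \<forall>x\<in>C. orthogonal x y} = W'"
    proof -
      have "(\<forall>x\<in>C. orthogonal x y) \<longleftrightarrow> (\<forall>x\<in>C. cinner_vec x y = 0)" for y
        unfolding orthogonal_def cinner_vec_0_iff using csubspace_scale[OF C(2)] by blast
      then show ?thesis unfolding W'_def by blast
    qed
    ultimately have dW': "dim W' + dim C = dim W" by simp
    define p' where "p' = dim W' div 2"
    have p'le: "p' \<le> p - c" using dW' C(4) less.prems(2) unfolding p'_def by linarith
    have p'lt: "p' < p" using p'le c1 p1 by linarith
    obtain K' where K': "finite K'" "\<forall>C\<in>K'. is_code E C \<and> C \<subseteq> W' \<and> C \<noteq> {0}"
      "(\<Sum>C\<in>K'. orth_proj C) = orth_proj W'" "card K' \<le> slog p' q"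
      using less.IH[OF p'lt W's p'_def[symmetric]] by blast
    have C0: "C \<noteq> {0}"
    proof
      assume "C = {0}"
      then have "C \<subseteq> {0}" by simp
      then have "dim C = 0" using dim_eq_0 by blast
      then show False using C(4) c1 by linarith
    qed
    have CK': "C \<notin> K'"
    proof
      assume "C \<in> K'"
      then have "C \<subseteq> W'" using K'(2) by blast
      then have "\<forall>y\<in>C. cinner_vec y y = 0" unfolding W'_def by blast
      then have "C \<subseteq> {0}" using cinner_self_eq_0 by blast
      then show False using C0 csubspace_0[OF C(2)] by blast
    qed
    have "card (insert C K') \<le> slog p q"
    proof -
      have "card (insert C K') = card K' + 1" using CK' K'(1) by simp
      also have "\<dots> \<le> slog p' q + 1" using K'(4) by simp
      also have "\<dots> \<le> slog (p - c) q + 1" using slog_mono[OF q1 p'le] by simp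
      also have "\<dots> = slog p q" unfolding c_def using slog_pos[OF p1 q1] by simp
      finally show ?thesis .
    qed
    moreover have "(\<Sum>C\<in>insert C K'. orth_proj C) = orth_proj W"
      using CK' K'(1,3) Psplit by simp
    moreover have "\<forall>D\<in>insert C K'. is_code E D \<and> D \<subseteq> W \<and> D \<noteq> {0}"
      using C C0 K'(2) unfolding W'_def by blast
    ultimately show ?thesis using K'(1) by (intro exI[of _ "insert C K'"]) auto
  qed
qed

theorem proposition4:
  fixes E :: "(complex^'n^'n) set"
  assumes "quantum_graph E"
  shows "\<exists>K. is_coloring E K \<and> card K \<le> slog CARD('n) (nat ((qnorm E + 1)^2))"
proof -
  have I: "mat 1 \<in> E" using assms unfolding quantum_graph_def by auto
  have I0: "mat 1 \<noteq> (0::complex^'n^'n)"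
  proof
    assume h: "mat 1 = (0::complex^'n^'n)"
    have "(mat 1 :: complex^'n^'n) $ undefined $ undefined = 1" by (simp add: mat_def)
    then show False using h by simp
  qed
  have m1: "1 \<le> dim E"
  proof (rule ccontr)
    assume "\<not> 1 \<le> dim E"
    then have "dim E = 0" by linarith
    then have "E \<subseteq> {0}" using dim_eq_0 by blast
    then show False using I I0 by auto
  qed
  define q where "q = (dim E)^2"
  have qe: "qnorm E + 1 = int (dim E)" unfolding qnorm_def by simp
  have qeq: "nat ((qnorm E + 1)^2) = q" unfolding qe q_def by (metis nat_int of_nat_power)
  have q1: "1 \<le> q" unfolding q_def using m1 by simp
  have d1: "dim (UNIV :: (complex^'n) set) = DIM(complex^'n)" by (rule dim_UNIV)
  have d2: "DIM(complex^'n) = CARD('n) * 2" by (simp add: DIM_cart DIM_complex)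
  have d3: "CARD('n) * 2 div 2 = CARD('n)" by simp
  have "dim (UNIV :: (complex^'n) set) div 2 = CARD('n)" unfolding d1 d2 d3 ..
  then obtain K where K: "finite K" "\<forall>C\<in>K. is_code E C \<and> C \<subseteq> UNIV \<and> C \<noteq> {0}"
    "(\<Sum>C\<in>K. orth_proj C) = orth_proj UNIV" "card K \<le> slog CARD('n) q"
    using coloring_rec[OF assms q_def q1 csubspace_UNIV] by blast
  have "is_coloring E K" unfolding is_coloring_def
  proof (intro conjI)
    show "finite K" by (rule K(1))
    show "\<forall>C\<in>K. is_code E C" using K(2) by blast
    show "(\<Sum>C\<in>K. orth_proj C) = mat 1" using K(3) orth_proj_UNIV by simp
  qed
  moreover have "card K \<le> slog CARD('n) (nat ((qnorm E + 1)^2))" using K(4) qeq by simp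
  ultimately show ?thesis by blast
qed


end
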